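(* Let $\beta$ be an ordered partition of $N$ and $x\in X^\beta$. Then $\bar W_{[x]}=\bar W_{\beta(x)}$, where $\bar W_{[x]}=\{u\in\bar W: ux\bar W_\beta=x\bar W_\beta\}$ and $\bar W_{\beta(x)}$ is the subgroup of $\bar W$ generated by the reflections $s_{\alpha}$ with $\alpha\in\bar\Pi\cap x(\bar R_{\beta,+})$.
   Context: Fix $N\ge2$. $\bar P=\bigoplus_{i=1}^N\mathbb Z\epsilon_i$ with $(\epsilon_i,\epsilon_j)=\delta_{ij}$; $\bar R=\{\alpha_{ij}=\epsilon_i-\epsilon_j:i\ne j\}$, $\bar R_+=\{\alpha_{ij}:i<j\}$, $\alpha_i=\alpha_{i,i+1}$, $\bar\Pi=\{\alpha_1,\dots,\alpha_{N-1}\}$; $\bar P_-=\{\eta\in\bar P:(\eta,\alpha)\le0\ \forall\alpha\in\bar R_+\}$. $\bar W=\mathfrak S_N$ acts by permuting indices; $W=\bar W\ltimes\bar P$ with elements $wt_\eta$, $wt_\eta w^{-1}=t_{w(\eta)}$. Affine roots (with formal $\delta$): $R=\{\bar\alpha+k\delta:\bar\alpha\in\bar R,k\in\mathbb Z\}$, $R_+=\{\bar\alpha+k\delta:\bar\alpha\in\bar R_+,k\ge0\}\cup\{-\bar\alpha+k\delta:\bar\alpha\in\bar R_+,k>0\}$, $R_-=R\setminus R_+$; $W$ acts on $R$ by $w(\bar\alpha+k\delta)=w(\bar\alpha)+k\delta$, $t_\eta(\bar\alpha+k\delta)=\bar\alpha+(k-(\eta,\bar\alpha))\delta$ (so $\bar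 R\subset R$ and $x(\bar R_{\beta,+})\subset R$); $l(w)=\#(R_+\cap w^{-1}(R_-))$. An ordered partition $\beta$ of $N$ gives blocks of consecutive indices of sizes $\beta_1,\dots,\beta_r$; $\bar R_\beta=\{\alpha_{ij}:i,j\text{ in the same block}\}$, $\bar R_{\beta,+}=\bar R_\beta\cap\bar R_+$, $\bar W_\beta$ the subgroup generated by $s_{\alpha_i}$, $\alpha_i\in\bar R_\beta$; $W^\beta=\{w\in W:l(wu)\ge l(w)\ \forall u\in\bar W_\beta\}$, $\bar W^\beta=W^\beta\cap\bar W$. For $w\in\bar W^\beta$, $\eta_w\in\bar P_-$ is defined by $(\eta_w,\epsilon_1)=0$ and $(\eta_w,\alpha_i)=-1$ if $\alpha_i\in w(\bar R_+\setminus\bar R_{\beta,+})$, $0$ otherwise; $\bar P_-(w)=\{\eta+\eta_w:\eta\in\bar P_-\}$; $X^\beta=\{t_\eta w:w\in\bar W^\beta,\eta\in\bar P_-(w)\}$. *)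

theory Defs
  imports "HOL-Combinatorics.Transposition" "HOL-Combinatorics.Permutations"
begin

text \<open>Indices 1..N of the paper are rendered as 0..<N.
  An element t_eta w of W is represented by the pair (eta, w), with
  eta :: nat => int (coefficients w.r.t. epsilon_i, zero outside 0..<N) and
  w a permutation of {0..<N} (identity outside).
  An affine root eps_i - eps_j + k delta is the triple (i, j, k).\<close>

type_synonym affW = "(nat \<Rightarrow> int) \<times> (nat \<Rightarrow> nat)"
type_synonym aroot = "nat \<times> nat \<times> int"

definition Wbar :: "nat \<Rightarrow> (nat \<Rightarrow> nat) set" where
  "Wbar N = {w. w permutes {0..<N}}"

definition isW :: "nat \<Rightarrow> affW \<Rightarrow> bool" where
  "isW N x \<longleftrightarrow> snd x permutes {0..<N} \<and> (\<forall>i\<ge>N. fst x i = 0)"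

text \<open>(t_eta w)(t_eta' w') = t_(eta + w(eta')) (w w'), where (w eta)(i) = eta(w^-1 i).\<close>
definition wmult :: "affW \<Rightarrow> affW \<Rightarrow> affW" where
  "wmult x y = (\<lambda>i. fst x i + fst y (inv (snd x) i), snd x \<circ> snd y)"

definition emb :: "(nat \<Rightarrow> nat) \<Rightarrow> affW" where
  "emb w = (\<lambda>_. 0, w)"

text \<open>Action: w(eps_i - eps_j + k delta) = eps_(w i) - eps_(w j) + k delta,
  t_eta(abar + k delta) = abar + (k - (eta, abar)) delta.\<close>
definition act :: "affW \<Rightarrow> aroot \<Rightarrow> aroot" where
  "act x a = (case a of (i, j, k) \<Rightarrow>
     (snd x i, snd x j, k - (fst x (snd x i) - fst x (snd x j))))"

definition pos_root :: "nat \<Rightarrow> aroot \<Rightarrow> bool" where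
  "pos_root N a = (case a of (i, j, k) \<Rightarrow> i < N \<and> j < N \<and>
     ((i < j \<and> k \<ge> 0) \<or> (j < i \<and> k > 0)))"

definition neg_root :: "nat \<Rightarrow> aroot \<Rightarrow> bool" where
  "neg_root N a = (case a of (i, j, k) \<Rightarrow> i < N \<and> j < N \<and> i \<noteq> j \<and>
     \<not> pos_root N a)"

definition len :: "nat \<Rightarrow> affW \<Rightarrow> nat" where
  "len N x = card {a. pos_root N a \<and> neg_root N (act x a)}"

definition ordered_partition :: "nat \<Rightarrow> nat list \<Rightarrow> bool" where
  "ordered_partition N \<beta> \<longleftrightarrow> (\<forall>b\<in>set \<beta>. 0 < b) \<and> sum_list \<beta> = N"

definition same_block :: "nat list \<Rightarrow> nat \<Rightarrow> nat \<Rightarrow> bool" where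
  "same_block \<beta> i j \<longleftrightarrow> (\<exists>k<length \<beta>.
     sum_list (take k \<beta>) \<le> i \<and> i < sum_list (take (Suc k) \<beta>) \<and>
     sum_list (take k \<beta>) \<le> j \<and> j < sum_list (take (Suc k) \<beta>))"

text \<open>Subgroup of permutations generated by a set of involutions (transpositions):
  closure under composition containing the identity.\<close>
inductive_set gen :: "(nat \<Rightarrow> nat) set \<Rightarrow> (nat \<Rightarrow> nat) set" for S where
  gen_id: "id \<in> gen S"
| gen_step: "s \<in> S \<Longrightarrow> g \<in> gen S \<Longrightarrow> s \<circ> g \<in> gen S"

definition Wbeta :: "nat \<Rightarrow> nat list \<Rightarrow> (nat \<Rightarrow> nat) set" where
  "Wbeta N \<beta> = gen {transpose i (Suc i) | i. Suc i < N \<and> same_block \<beta> i (Suc i)}"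

definition Wupper :: "nat \<Rightarrow> nat list \<Rightarrow> affW set" where
  "Wupper N \<beta> = {x. isW N x \<and> (\<forall>u\<in>Wbeta N \<beta>. len N (wmult x (emb u)) \<ge> len N x)}"

definition WbarUpper :: "nat \<Rightarrow> nat list \<Rightarrow> (nat \<Rightarrow> nat) set" where
  "WbarUpper N \<beta> = {w \<in> Wbar N. emb w \<in> Wupper N \<beta>}"

text \<open>alpha_m \<in> w(Rbar_+ \ Rbar_beta,+).\<close>
definition eta_cond :: "nat \<Rightarrow> nat list \<Rightarrow> (nat \<Rightarrow> nat) \<Rightarrow> nat \<Rightarrow> bool" where
  "eta_cond N \<beta> w m \<longleftrightarrow> (\<exists>i j. i < j \<and> j < N \<and> \<not> same_block \<beta> i j \<and>
      w i = m \<and> w j = Suc m)"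

text \<open>eta_w: (eta_w, eps_1) = 0 and (eta_w, alpha_m) = -1 if eta_cond, 0 otherwise.\<close>
definition eta_w :: "nat \<Rightarrow> nat list \<Rightarrow> (nat \<Rightarrow> nat) \<Rightarrow> nat \<Rightarrow> int" where
  "eta_w N \<beta> w = (\<lambda>i. if i < N then int (card {m. m < i \<and> eta_cond N \<beta> w m}) else 0)"

definition Pminus :: "nat \<Rightarrow> (nat \<Rightarrow> int) set" where
  "Pminus N = {\<eta>. (\<forall>i\<ge>N. \<eta> i = 0) \<and> (\<forall>i j. i < j \<and> j < N \<longrightarrow> \<eta> i \<le> \<eta> j)}"

definition Xbeta :: "nat \<Rightarrow> nat list \<Rightarrow> affW set" where
  "Xbeta N \<beta> = {((\<lambda>i. \<eta> i + eta_w N \<beta> w i), w) | \<eta> w.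
      w \<in> WbarUpper N \<beta> \<and> \<eta> \<in> Pminus N}"

definition coset :: "nat \<Rightarrow> nat list \<Rightarrow> affW \<Rightarrow> affW set" where
  "coset N \<beta> x = (\<lambda>v. wmult x (emb v)) ` Wbeta N \<beta>"

definition Wstab :: "nat \<Rightarrow> nat list \<Rightarrow> affW \<Rightarrow> (nat \<Rightarrow> nat) set" where
  "Wstab N \<beta> x = {u \<in> Wbar N. (\<lambda>y. wmult (emb u) y) ` coset N \<beta> x = coset N \<beta> x}"

definition Wbetax :: "nat \<Rightarrow> nat list \<Rightarrow> affW \<Rightarrow> (nat \<Rightarrow> nat) set" where
  "Wbetax N \<beta> x = gen {transpose m (Suc m) | m. Suc m < N \<and>
      (\<exists>i j. i < j \<and> j < N \<and> same_block \<beta> i j \<and> act x (i, j, 0) = (m, Suc m, 0))}"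

end

theory Submission
  imports Defs
begin

definition eqv_on :: "nat \<Rightarrow> (nat \<Rightarrow> nat \<Rightarrow> bool) \<Rightarrow> bool" where
  "eqv_on N R \<longleftrightarrow> (\<forall>i<N. R i i) \<and> (\<forall>i j. i<N \<longrightarrow> j<N \<longrightarrow> R i j \<longrightarrow> R j i)
     \<and> (\<forall>i j k. i<N \<longrightarrow> j<N \<longrightarrow> k<N \<longrightarrow> R i j \<longrightarrow> R j k \<longrightarrow> R i k)"

lemma eqv_refl: "eqv_on N R \<Longrightarrow> i < N \<Longrightarrow> R i i" unfolding eqv_on_def by blast
lemma eqv_sym: "eqv_on N R \<Longrightarrow> i < N \<Longrightarrow> j < N \<Longrightarrow> R i j \<Longrightarrow> R j i" unfolding eqv_on_def by blast
lemma eqv_trans: "eqv_on N R \<Longrightarrow> i < N \<Longrightarrow> j < N \<Longrightarrow> k < N \<Longrightarrow> R i j \<Longrightarrow> R j k \<Longrightarrow> R i k"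
  unfolding eqv_on_def by blast

definition intv :: "nat \<Rightarrow> (nat \<Rightarrow> nat \<Rightarrow> bool) \<Rightarrow> bool" where
  "intv N R \<longleftrightarrow> (\<forall>a b d. a \<le> d \<longrightarrow> d \<le> b \<longrightarrow> b < N \<longrightarrow> R a b \<longrightarrow> R a d)"

definition adjgen :: "nat \<Rightarrow> (nat \<Rightarrow> nat \<Rightarrow> bool) \<Rightarrow> (nat \<Rightarrow> nat) set" where
  "adjgen N R = gen {transpose m (Suc m) | m. Suc m < N \<and> R m (Suc m)}"

lemma gen_comp: "g \<in> gen S \<Longrightarrow> h \<in> gen S \<Longrightarrow> g \<circ> h \<in> gen S"
  by (induction g rule: gen.induct) (auto simp: comp_assoc intro: gen.intros)

lemma gen_sub: "s \<in> S \<Longrightarrow> s \<in> gen S"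
  using gen_step[OF _ gen_id, of s S] by simp

lemma adj_transpose:
  assumes E: "eqv_on N R" and I: "intv N R"
  shows "a < b \<Longrightarrow> b < N \<Longrightarrow> R a b \<Longrightarrow> transpose a b \<in> adjgen N R"
proof (induction "b - a" arbitrary: a)
  case 0 then show ?case by simp
next
  case (Suc k)
  have a1: "a \<le> Suc a" "Suc a \<le> b" using Suc.prems by auto
  have Ra1: "R a (Suc a)" using I Suc.prems a1 unfolding intv_def by blast
  have s: "transpose a (Suc a) \<in> adjgen N R" unfolding adjgen_def
    by (rule gen_sub) (use Suc.prems Ra1 in auto)
  show ?case
  proof (cases "b = Suc a")
    case True then show ?thesis using s by simp
  next
    case False
    have R1b: "R (Suc a) b"
    using eqv_trans[OF E _ _ _ eqv_sym[OF E _ _ Ra1] Suc.prems(3)] Suc.prems by simp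
    have "transpose (Suc a) b \<in> adjgen N R" using Suc False R1b by auto
    then have "transpose a (Suc a) \<circ> transpose (Suc a) b \<circ> transpose a (Suc a) \<in> adjgen N R"
      using s unfolding adjgen_def by (intro gen_comp)
    moreover have "transpose a (Suc a) \<circ> transpose (Suc a) b \<circ> transpose a (Suc a) = transpose a b"
      using False Suc.prems by (intro transpose_comp_triple) auto
    ultimately show ?thesis by simp
  qed
qed

lemma adjgen_sub:
  assumes E: "eqv_on N R"
  shows "u \<in> adjgen N R \<Longrightarrow> u permutes {0..<N} \<and> (\<forall>i<N. R (u i) i)"
  unfolding adjgen_def
proof (induction u rule: gen.induct)
  case gen_id show ?case
  proof
    show "id permutes {0..<N}" by (rule permutes_id)
    show "\<forall>i<N. R (id i) i" using eqv_refl[OF E] by simp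
  qed
next
  case (gen_step s g)
  then obtain m where m: "s = transpose m (Suc m)" "Suc m < N" "R m (Suc m)" by auto
  have sp: "s permutes {0..<N}" using m by (auto intro: permutes_swap_id)
  have sR: "R (s i) i" if "i < N" for i
  proof -
    have "R m (Suc m)" "R (Suc m) m" "R i i" using m that eqv_refl[OF E] eqv_sym[OF E] by auto
    then show ?thesis using m by (auto simp: transpose_def)
  qed
  show ?case
  proof
    show "s \<circ> g permutes {0..<N}" using sp gen_step by (simp add: permutes_compose)
    show "\<forall>i<N. R ((s \<circ> g) i) i"
    proof (intro allI impI)
      fix i assume i: "i < N"
      have gi: "g i < N" using gen_step i by (meson atLeastLessThan_iff permutes_in_image zero_le)
      have si: "s (g i) < N" using sp gi by (meson atLeastLessThan_iff permutes_in_image zero_le)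
      have "R (g i) i" using gen_step i by blast
      then show "R ((s \<circ> g) i) i" using eqv_trans[OF E si gi i sR[OF gi]] by simp
    qed
  qed
qed

lemma adjgen_sup:
  assumes E: "eqv_on N R" and I: "intv N R"
  shows "n \<le> N \<Longrightarrow> u permutes {0..<N} \<Longrightarrow> (\<forall>i<N. R (u i) i) \<Longrightarrow> (\<forall>i\<ge>n. u i = i) \<Longrightarrow> u \<in> adjgen N R"
proof (induction n arbitrary: u)
  case 0
  then have "u = id" by auto
  then show ?case unfolding adjgen_def by (simp only: gen_id)
next
  case (Suc n)
  show ?case
  proof (cases "u n = n")
    case True
    then have "\<forall>i\<ge>n. u i = i" using Suc.prems by (metis le_antisym not_less_eq_eq)
    then show ?thesis using Suc by auto
  next
    case False
    define p where "p = inv u n"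
    have nN: "n < N" using Suc.prems by auto
    have up: "u p = n" unfolding p_def using Suc.prems(2) by (meson permutes_inverses(1))
    have pN: "p < N" using up Suc.prems(2) nN
      by (metis atLeastLessThan_iff permutes_not_in zero_le)
    have pn: "p < n"
    proof -
      have "p \<noteq> n" using up False by auto
      moreover have "\<not> p \<ge> Suc n" using Suc.prems(4) up by force
      ultimately show ?thesis by auto
    qed
    have Rnp: "R n p" using Suc.prems(3) pN up by metis
    have Rpn: "R p n" using eqv_sym[OF E nN pN Rnp] .
    define u' where "u' = u \<circ> transpose p n"
    have u'p: "u' permutes {0..<N}" unfolding u'_def using Suc.prems pN nN
      by (intro permutes_compose permutes_swap_id) auto
    have u'R: "\<forall>i<N. R (u' i) i"
    proof (intro allI impI)
      fix i assume i: "i < N"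
      have ti: "transpose p n i < N" using i pN nN by (auto simp: transpose_def)
      have "R (transpose p n i) i" using Rnp Rpn i eqv_refl[OF E i] by (auto simp: transpose_def)
      moreover have "R (u (transpose p n i)) (transpose p n i)" using Suc.prems(3) ti by auto
      moreover have "u (transpose p n i) < N" using Suc.prems(2) ti
        by (meson atLeastLessThan_iff permutes_in_image zero_le)
      ultimately show "R (u' i) i" using eqv_trans[OF E _ ti i] unfolding u'_def by simp
    qed
    have u'f: "\<forall>i\<ge>n. u' i = i"
    proof (intro allI impI)
      fix i assume "n \<le> i"
      then show "u' i = i" unfolding u'_def using up pn Suc.prems(4)
        by (cases "i = n") (auto simp: transpose_def)
    qed
    have "u' \<in> adjgen N R" using Suc.IH[OF _ u'p u'R u'f] Suc.prems by auto
    moreover have "transpose p n \<in> adjgen N R" using adj_transpose[OF E I pn nN Rpn] .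
    ultimately have "u' \<circ> transpose p n \<in> adjgen N R" unfolding adjgen_def by (rule gen_comp)
    moreover have "u' \<circ> transpose p n = u" unfolding u'_def by (simp add: comp_assoc)
    ultimately show ?thesis by simp
  qed
qed

lemma adjgen_char:
  assumes E: "eqv_on N R" and I: "intv N R"
  shows "adjgen N R = {u. u permutes {0..<N} \<and> (\<forall>i<N. R (u i) i)}"
proof
  show "adjgen N R \<subseteq> {u. u permutes {0..<N} \<and> (\<forall>i<N. R (u i) i)}" using adjgen_sub[OF E] by blast
  show "{u. u permutes {0..<N} \<and> (\<forall>i<N. R (u i) i)} \<subseteq> adjgen N R"
  proof
    fix u assume u: "u \<in> {u. u permutes {0..<N} \<and> (\<forall>i<N. R (u i) i)}"
    have "\<forall>i\<ge>N. u i = i" using u by (auto simp: permutes_def)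
    then show "u \<in> adjgen N R" using adjgen_sup[OF E I, of N u] u by auto
  qed
qed


lemma sum_take_mono: "m \<le> n \<Longrightarrow> sum_list (take m (xs::nat list)) \<le> sum_list (take n xs)"
proof -
  assume "m \<le> n"
  then obtain d where "n = m + d" using le_Suc_ex by blast
  then show ?thesis by (simp add: take_add)
qed

lemma sb_refl:
  assumes "ordered_partition N \<beta>" "i < N"
  shows "same_block \<beta> i i"
proof -
  have ex: "\<exists>k. i < sum_list (take (Suc k) \<beta>)"
    using assms by (intro exI[of _ "length \<beta>"]) (auto simp: ordered_partition_def)
  define k where "k = (LEAST k. i < sum_list (take (Suc k) \<beta>))"
  have k1: "i < sum_list (take (Suc k) \<beta>)" unfolding k_def using ex by (rule LeastI_ex)
  have k2: "sum_list (take k \<beta>) \<le> i"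
  proof (cases k)
    case 0 then show ?thesis by simp
  next
    case (Suc k')
    then have "\<not> i < sum_list (take (Suc k') \<beta>)" unfolding k_def using not_less_Least
      by (metis k_def lessI)
    then show ?thesis using Suc by simp
  qed
  have k3: "k < length \<beta>"
  proof (rule ccontr)
    assume "\<not> k < length \<beta>"
    then have "take k \<beta> = \<beta>" by simp
    then show False using k2 assms by (auto simp: ordered_partition_def)
  qed
  show ?thesis unfolding same_block_def using k1 k2 k3 by blast
qed

lemma block_unique:
  assumes "sum_list (take k (\<beta>::nat list)) \<le> j" "j < sum_list (take (Suc k) \<beta>)"
    "sum_list (take k' \<beta>) \<le> j" "j < sum_list (take (Suc k') \<beta>)"
  shows "k = k'"
proof (rule ccontr)
  assume "k \<noteq> k'"
  then consider "Suc k \<le> k'" | "Suc k' \<le> k" by linarith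
  then show False
  proof cases
    case 1 then show False using sum_take_mono[OF 1, of \<beta>] assms by linarith
  next
    case 2 then show False using sum_take_mono[OF 2, of \<beta>] assms by linarith
  qed
qed

lemma sb_eqv: "ordered_partition N \<beta> \<Longrightarrow> eqv_on N (same_block \<beta>)"
  unfolding eqv_on_def
proof (intro conjI allI impI)
  fix i assume "ordered_partition N \<beta>" "i < N" then show "same_block \<beta> i i" by (rule sb_refl)
next
  fix i j assume "same_block \<beta> i j" then show "same_block \<beta> j i" unfolding same_block_def by blast
next
  fix i j k assume "same_block \<beta> i j" "same_block \<beta> j k"
  then obtain a b where a: "a < length \<beta>" "sum_list (take a \<beta>) \<le> i" "i < sum_list (take (Suc a) \<beta>)"
     "sum_list (take a \<beta>) \<le> j" "j < sum_list (take (Suc a) \<beta>)"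
    and b: "b < length \<beta>" "sum_list (take b \<beta>) \<le> j" "j < sum_list (take (Suc b) \<beta>)"
     "sum_list (take b \<beta>) \<le> k" "k < sum_list (take (Suc b) \<beta>)"
    unfolding same_block_def by blast
  have "a = b" using block_unique a b by blast
  then show "same_block \<beta> i k" unfolding same_block_def using a b by blast
qed

lemma sb_intv: "intv N (same_block \<beta>)"
  unfolding intv_def
proof (intro allI impI)
  fix a b d assume "a \<le> d" "d \<le> b" "b < N" "same_block \<beta> a b"
  then show "same_block \<beta> a d" unfolding same_block_def
    by (elim exE conjE) (metis le_less_trans order_trans)
qed

lemma Wbeta_char: "ordered_partition N \<beta> \<Longrightarrow>
  Wbeta N \<beta> = {u. u permutes {0..<N} \<and> (\<forall>i<N. same_block \<beta> (u i) i)}"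
proof -
  assume op: "ordered_partition N \<beta>"
  have "Wbeta N \<beta> = adjgen N (same_block \<beta>)" unfolding Wbeta_def adjgen_def by simp
  then show ?thesis using adjgen_char[OF sb_eqv[OF op] sb_intv] by simp
qed

definition invs :: "nat \<Rightarrow> (nat \<Rightarrow> nat) \<Rightarrow> (nat \<times> nat) set" where
  "invs N w = {(a,b). a < b \<and> b < N \<and> w b < w a}"

lemma len_emb:
  assumes "w permutes {0..<N}"
  shows "len N (emb w) = card (invs N w)"
proof -
  have wN: "i < N \<Longrightarrow> w i < N" for i using assms
    by (meson atLeastLessThan_iff permutes_in_image zero_le)
  have wi: "w i = w j \<Longrightarrow> i = j" for i j using assms by (metis permutes_inverses(2))
  have "{a. pos_root N a \<and> neg_root N (act (emb w) a)} = (\<lambda>(i,j). (i,j,0::int)) ` invs N w"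
  proof (rule set_eqI)
    fix a :: aroot
    obtain i j k where a: "a = (i,j,k)" by (cases a) auto
    show "a \<in> {a. pos_root N a \<and> neg_root N (act (emb w) a)} \<longleftrightarrow> a \<in> (\<lambda>(i,j). (i,j,0::int)) ` invs N w"
    proof -
      have act: "act (emb w) (i,j,k) = (w i, w j, k)" by (simp add: act_def emb_def)
      have "pos_root N (i,j,k) \<and> neg_root N (w i, w j, k) \<longleftrightarrow> k = 0 \<and> (i,j) \<in> invs N w"
      proof
        assume H: "pos_root N (i,j,k) \<and> neg_root N (w i, w j, k)"
        then have "i<N" "j<N" "w i \<noteq> w j" and P: "(i<j \<and> k\<ge>0) \<or> (j<i \<and> k>0)"
          and nP: "\<not>((w i<w j \<and> k\<ge>0) \<or> (w j<w i \<and> k>0))"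
          by (simp_all add: pos_root_def neg_root_def)
        then show "k = 0 \<and> (i,j) \<in> invs N w" unfolding invs_def by auto
      next
        assume "k = 0 \<and> (i,j) \<in> invs N w"
        then show "pos_root N (i,j,k) \<and> neg_root N (w i, w j, k)"
          using wN[of i] wN[of j] by (auto simp: pos_root_def neg_root_def invs_def)
      qed
      moreover have "(i,j,k) \<in> (\<lambda>(i,j). (i,j,0::int)) ` invs N w \<longleftrightarrow> k = 0 \<and> (i,j) \<in> invs N w"
        by auto
      ultimately show ?thesis unfolding a using act by simp
    qed
  qed
  moreover have "inj_on (\<lambda>(i,j). (i,j,0::int)) (invs N w)" by (auto simp: inj_on_def)
  ultimately show ?thesis unfolding len_def by (simp add: card_image)
qed

lemma wmult_emb: "wmult (emb w) (emb u) = emb (w \<circ> u)"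
  by (simp add: wmult_def emb_def)

lemma finite_invs: "finite (invs N w)"
proof -
  have "invs N w \<subseteq> {..<N} \<times> {..<N}" by (auto simp: invs_def)
  then show ?thesis by (rule finite_subset) auto
qed

lemma invs_swap_less:
  assumes wp: "w permutes {0..<N}" and i: "Suc i < N" and d: "w (Suc i) < w i"
  shows "card (invs N (w \<circ> transpose i (Suc i))) < card (invs N w)"
proof -
  let ?s = "transpose i (Suc i)"
  let ?f = "\<lambda>(a,b). (?s a, ?s b)"
  have "?f ` invs N (w \<circ> ?s) \<subseteq> invs N w - {(i, Suc i)}"
  proof
    fix p assume "p \<in> ?f ` invs N (w \<circ> ?s)"
    then obtain a b where p: "p = (?s a, ?s b)" and ab: "a < b" "b < N" "w (?s b) < w (?s a)"
      by (auto simp: invs_def)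
    have ne: "(a,b) \<noteq> (i, Suc i)" using ab d by auto
    have "?s a < ?s b" using ab(1) ne by (auto simp: transpose_def)
    moreover have "?s b < N" using ab(2) i by (auto simp: transpose_def)
    moreover have "(?s a, ?s b) \<noteq> (i, Suc i)" using ne ab(1) by (auto simp: transpose_def split: if_splits)
    ultimately show "p \<in> invs N w - {(i, Suc i)}" using p ab by (auto simp: invs_def)
  qed
  moreover have "inj_on ?f (invs N (w \<circ> ?s))"
    by (auto simp: inj_on_def transpose_eq_iff)
  ultimately have "card (invs N (w \<circ> ?s)) \<le> card (invs N w - {(i, Suc i)})"
    by (metis card_image card_mono finite_Diff finite_invs)
  moreover have "(i, Suc i) \<in> invs N w" using i d by (auto simp: invs_def)
  ultimately show ?thesis using finite_invs
    by (metis card_Diff1_less order_le_less_trans)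
qed

lemma upper_adj:
  assumes op: "ordered_partition N \<beta>" and w: "w \<in> WbarUpper N \<beta>"
    and i: "Suc i < N" and sb: "same_block \<beta> i (Suc i)"
  shows "w i < w (Suc i)"
proof (rule ccontr)
  assume "\<not> w i < w (Suc i)"
  moreover have wp: "w permutes {0..<N}" using w by (auto simp: WbarUpper_def Wbar_def)
  moreover have "w i \<noteq> w (Suc i)" using wp by (metis n_not_Suc_n permutes_inverses(2))
  ultimately have d: "w (Suc i) < w i" by auto
  have "transpose i (Suc i) \<in> Wbeta N \<beta>" unfolding Wbeta_def
    by (rule gen_sub) (use i sb in auto)
  then have "len N (wmult (emb w) (emb (transpose i (Suc i)))) \<ge> len N (emb w)"
    using w by (auto simp: WbarUpper_def Wupper_def)
  moreover have "w \<circ> transpose i (Suc i) permutes {0..<N}" using wp i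
    by (intro permutes_compose permutes_swap_id) auto
  ultimately show False using invs_swap_less[OF wp i d] len_emb wp
    by (simp add: wmult_emb)
qed

lemma upper_mono:
  assumes op: "ordered_partition N \<beta>" and w: "w \<in> WbarUpper N \<beta>"
  shows "i < j \<Longrightarrow> j < N \<Longrightarrow> same_block \<beta> i j \<Longrightarrow> w i < w j"
proof (induction j)
  case 0 then show ?case by simp
next
  case (Suc j)
  have ij: "i \<le> j" "j \<le> Suc j" using Suc.prems by auto
  have sij: "same_block \<beta> i j" using sb_intv[of N \<beta>] Suc.prems ij unfolding intv_def by blast
  have sb1: "same_block \<beta> j (Suc j)"
    using eqv_trans[OF sb_eqv[OF op] _ _ _ eqv_sym[OF sb_eqv[OF op] _ _ sij] Suc.prems(3)] Suc.prems by simp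
  have "w j < w (Suc j)" using upper_adj[OF op w _ sb1] Suc.prems by auto
  moreover have "i < j \<Longrightarrow> w i < w j"
  proof -
    assume ij: "i < j"
    then show ?thesis using Suc sij by auto
  qed
  ultimately show ?case using Suc.prems by (cases "i = j") auto
qed


definition etap :: "nat \<Rightarrow> nat list \<Rightarrow> (nat \<Rightarrow> int) \<Rightarrow> (nat \<Rightarrow> nat) \<Rightarrow> nat \<Rightarrow> int" where
  "etap N \<beta> \<eta> w i = \<eta> i + eta_w N \<beta> w i"

definition Rx :: "nat \<Rightarrow> nat list \<Rightarrow> (nat \<Rightarrow> int) \<Rightarrow> (nat \<Rightarrow> nat) \<Rightarrow> nat \<Rightarrow> nat \<Rightarrow> bool" where
  "Rx N \<beta> \<eta> w a b \<longleftrightarrow> etap N \<beta> \<eta> w a = etap N \<beta> \<eta> w b \<and> same_block \<beta> (inv w a) (inv w b)"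

lemma etaw_mono: "i \<le> j \<Longrightarrow> j < N \<Longrightarrow> eta_w N \<beta> w i \<le> eta_w N \<beta> w j"
proof -
  assume ij: "i \<le> j" "j < N"
  have "card {m. m < i \<and> eta_cond N \<beta> w m} \<le> card {m. m < j \<and> eta_cond N \<beta> w m}"
    by (rule card_mono) (use ij in auto)
  then show ?thesis using ij by (simp add: eta_w_def)
qed

lemma etap_mono:
  assumes "\<eta> \<in> Pminus N"
  shows "i \<le> j \<Longrightarrow> j < N \<Longrightarrow> etap N \<beta> \<eta> w i \<le> etap N \<beta> \<eta> w j"
proof -
  assume ij: "i \<le> j" "j < N"
  have "\<eta> i \<le> \<eta> j" using assms ij by (cases "i = j") (auto simp: Pminus_def)
  then show ?thesis using etaw_mono[OF ij, of \<beta> w] by (simp add: etap_def)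
qed

lemma etap_jump:
  assumes "\<eta> \<in> Pminus N" and m: "Suc m < N" and c: "eta_cond N \<beta> w m"
  shows "etap N \<beta> \<eta> w m < etap N \<beta> \<eta> w (Suc m)"
proof -
  have "{m'. m' < Suc m \<and> eta_cond N \<beta> w m'} = insert m {m'. m' < m \<and> eta_cond N \<beta> w m'}"
    using c by auto
  then have "card {m'. m' < Suc m \<and> eta_cond N \<beta> w m'} = Suc (card {m'. m' < m \<and> eta_cond N \<beta> w m'})"
    by simp
  moreover have "\<eta> m \<le> \<eta> (Suc m)" using assms by (auto simp: Pminus_def)
  ultimately show ?thesis using m by (simp add: etap_def eta_w_def)
qed

lemma inv_lt: "w permutes {0..<(N::nat)} \<Longrightarrow> a < N \<Longrightarrow> inv w a < N"
proof -
  assume wp: "w permutes {0..<N}" and a: "a < N"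
  have "inv w permutes {0..<N}" by (rule permutes_inv[OF wp])
  then have "inv w a \<in> {0..<N} \<longleftrightarrow> a \<in> {0..<N}" by (rule permutes_in_image)
  then show ?thesis using a by auto
qed

lemma Rx_eqv:
  assumes op: "ordered_partition N \<beta>" and wp: "w permutes {0..<N}"
  shows "eqv_on N (Rx N \<beta> \<eta> w)"
  unfolding eqv_on_def
proof (intro conjI allI impI)
  have E: "eqv_on N (same_block \<beta>)" using sb_eqv[OF op] .
  fix i assume "i < N"
  then show "Rx N \<beta> \<eta> w i i" unfolding Rx_def using eqv_refl[OF E inv_lt[OF wp]] by blast
next
  have E: "eqv_on N (same_block \<beta>)" using sb_eqv[OF op] .
  fix i j assume ij: "i < N" "j < N" and R: "Rx N \<beta> \<eta> w i j"
  have "same_block \<beta> (inv w j) (inv w i)"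
    using eqv_sym[OF E inv_lt[OF wp ij(1)] inv_lt[OF wp ij(2)]] R unfolding Rx_def by blast
  then show "Rx N \<beta> \<eta> w j i" using R unfolding Rx_def by auto
next
  have E: "eqv_on N (same_block \<beta>)" using sb_eqv[OF op] .
  fix i j k assume ijk: "i < N" "j < N" "k < N" and R1: "Rx N \<beta> \<eta> w i j" and R2: "Rx N \<beta> \<eta> w j k"
  have "same_block \<beta> (inv w i) (inv w k)"
    using eqv_trans[OF E inv_lt[OF wp ijk(1)] inv_lt[OF wp ijk(2)] inv_lt[OF wp ijk(3)]] R1 R2
    unfolding Rx_def by blast
  then show "Rx N \<beta> \<eta> w i k" using R1 R2 unfolding Rx_def by auto
qed

lemma Rx_intv:
  assumes op: "ordered_partition N \<beta>" and w: "w \<in> WbarUpper N \<beta>" and eta: "\<eta> \<in> Pminus N"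
  shows "intv N (Rx N \<beta> \<eta> w)"
  unfolding intv_def
proof (intro allI impI)
  fix a b d assume ad: "a \<le> d" and db: "d \<le> b" and bN: "b < N" and R: "Rx N \<beta> \<eta> w a b"
  let ?e = "etap N \<beta> \<eta> w"
  let ?sb = "same_block \<beta>"
  let ?wi = "inv w"
  have wp: "w permutes {0..<N}" using w by (auto simp: WbarUpper_def Wbar_def)
  have E: "eqv_on N ?sb" using sb_eqv[OF op] .
  have eab: "?e a = ?e b" using R by (simp add: Rx_def)
  have lev: "?e d = ?e a" using etap_mono[OF eta ad, of \<beta> w] etap_mono[OF eta db bN, of \<beta> w] eab db bN by auto
  have nojump: "\<not> eta_cond N \<beta> w m" if "a \<le> m" "m < b" for m
  proof
    assume c: "eta_cond N \<beta> w m"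
    have "?e m < ?e (Suc m)" using etap_jump[OF eta _ c] that bN by auto
    moreover have "?e (Suc m) \<le> ?e b" using etap_mono[OF eta _ bN] that by auto
    moreover have "?e a \<le> ?e m" using etap_mono[OF eta that(1)] that bN by auto
    ultimately show False using eab by auto
  qed
  define Q where "Q x y \<longleftrightarrow> x \<le> y \<or> ?sb x y" for x y
  have Qtrans: "Q x z" if hyp: "x < N" "y < N" "z < N" "Q x y" "Q y z" for x y z
  proof -
    have h1: "x \<le> y \<or> ?sb x y" and h2: "y \<le> z \<or> ?sb y z" using hyp(4,5) unfolding Q_def by auto
    consider "x \<le> y" "y \<le> z" | "x \<le> y" "?sb y z" | "?sb x y" "y \<le> z" | "?sb x y" "?sb y z"
      using h1 h2 by blast
    then show ?thesis
    proof cases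
      case 1 then show ?thesis unfolding Q_def by auto
    next
      case 2
      show ?thesis
      proof (cases "x \<le> z")
        case True then show ?thesis unfolding Q_def by auto
      next
        case False
        have "?sb z y" using eqv_sym[OF E _ _ 2(2)] hyp by auto
        moreover have "z \<le> x" "x \<le> y" "y < N" using False 2 hyp by auto
        ultimately have "?sb z x" using sb_intv[of N \<beta>] unfolding intv_def by blast
        then show ?thesis using eqv_sym[OF E] hyp unfolding Q_def by auto
      qed
    next
      case 3
      show ?thesis
      proof (cases "x \<le> z")
        case True then show ?thesis unfolding Q_def by auto
      next
        case False
        have "?sb y x" using eqv_sym[OF E _ _ 3(1)] hyp by auto
        moreover have "y \<le> z" "z \<le> x" "x < N" using False 3 hyp by auto
        ultimately have "?sb y z" using sb_intv[of N \<beta>] unfolding intv_def by blast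
        then show ?thesis using eqv_trans[OF E _ _ _ 3(1)] hyp unfolding Q_def by auto
      qed
    next
      case 4 then show ?thesis using eqv_trans[OF E] hyp unfolding Q_def by blast
    qed
  qed
  have step: "Q (?wi (Suc m)) (?wi m)" if "a \<le> m" "m < b" for m
  proof -
    let ?p = "?wi m" and ?q = "?wi (Suc m)"
    have pN: "?p < N" and qN: "?q < N" using inv_lt[OF wp] that bN by auto
    have wpq: "w ?p = m" "w ?q = Suc m" using wp by (auto simp: permutes_inverses(1))
    show ?thesis
    proof (cases "?sb ?p ?q")
      case True then show ?thesis using eqv_sym[OF E pN qN] unfolding Q_def by auto
    next
      case False
      have "\<not> ?p < ?q"
      proof
        assume "?p < ?q"
        then have "eta_cond N \<beta> w m" unfolding eta_cond_def using False qN wpq by blast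
        then show False using nojump that by auto
      qed
      then show ?thesis unfolding Q_def by auto
    qed
  qed
  have chain: "Q (?wi e) (?wi c)" if "a \<le> c" "c \<le> e" "e \<le> b" for c e
    using that
  proof (induction e)
    case 0 then have "c = 0" by auto then show ?case unfolding Q_def by auto
  next
    case (Suc e)
    show ?case
    proof (cases "c = Suc e")
      case True then show ?thesis unfolding Q_def by auto
    next
      case False
      then have ce: "c \<le> e" using Suc.prems by auto
      then have "Q (?wi e) (?wi c)" using Suc by auto
      moreover have "Q (?wi (Suc e)) (?wi e)" using step Suc.prems ce by auto
      moreover have "?wi (Suc e) < N" "?wi e < N" "?wi c < N" using inv_lt[OF wp] Suc.prems bN ce by auto
      ultimately show ?thesis using Qtrans by blast
    qed
  qed
  have Qbd: "Q (?wi b) (?wi d)" using chain[OF ad db order.refl] .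
  have Qda: "Q (?wi d) (?wi a)" using chain[OF order.refl ad db] .
  have sab: "?sb (?wi a) (?wi b)" using R by (simp add: Rx_def)
  have aN: "?wi a < N" and bN': "?wi b < N" and dN: "?wi d < N" using inv_lt[OF wp] ad db bN by auto
  have "?sb (?wi d) (?wi a)"
  proof (rule ccontr)
    assume ns: "\<not> ?sb (?wi d) (?wi a)"
    then have da: "?wi d \<le> ?wi a" using Qda unfolding Q_def by auto
    show False
    proof (cases "?sb (?wi b) (?wi d)")
      case True
      then have "?sb (?wi a) (?wi d)" using eqv_trans[OF E aN bN' dN sab] by auto
      then show False using ns eqv_sym[OF E aN dN] by auto
    next
      case False
      then have "?wi b \<le> ?wi d" using Qbd unfolding Q_def by auto
      moreover have "?sb (?wi b) (?wi a)" using eqv_sym[OF E aN bN' sab] .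
      ultimately have "?sb (?wi b) (?wi d)" using sb_intv[of N \<beta>] da aN unfolding intv_def by blast
      then show False using False by auto
    qed
  qed
  then show "Rx N \<beta> \<eta> w a d" unfolding Rx_def using lev eqv_sym[OF E dN aN] by auto
qed


lemma Wbetax_char:
  assumes op: "ordered_partition N \<beta>" and w: "w \<in> WbarUpper N \<beta>" and eta: "\<eta> \<in> Pminus N"
    and x: "x = (etap N \<beta> \<eta> w, w)"
  shows "Wbetax N \<beta> x = {u. u permutes {0..<N} \<and> (\<forall>m<N. Rx N \<beta> \<eta> w (u m) m)}"
proof -
  let ?e = "etap N \<beta> \<eta> w"
  have wp: "w permutes {0..<N}" using w by (auto simp: WbarUpper_def Wbar_def)
  have E: "eqv_on N (same_block \<beta>)" using sb_eqv[OF op] .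
  have key: "(\<exists>i j. i < j \<and> j < N \<and> same_block \<beta> i j \<and> act x (i, j, 0) = (m, Suc m, 0))
      \<longleftrightarrow> Rx N \<beta> \<eta> w m (Suc m)" if m: "Suc m < N" for m
  proof
    assume "\<exists>i j. i < j \<and> j < N \<and> same_block \<beta> i j \<and> act x (i, j, 0) = (m, Suc m, 0)"
    then obtain i j where ij: "i < j" "j < N" "same_block \<beta> i j" "act x (i, j, 0) = (m, Suc m, 0)" by blast
    then have wij: "w i = m" "w j = Suc m" "?e (w i) = ?e (w j)" by (auto simp: act_def x)
    have "inv w (w i) = i" "inv w (w j) = j" using wp by (simp_all add: permutes_inverses(2))
    then have "inv w m = i" "inv w (Suc m) = j" using wij by simp_all
    then show "Rx N \<beta> \<eta> w m (Suc m)" unfolding Rx_def using wij ij by auto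
  next
    assume R: "Rx N \<beta> \<eta> w m (Suc m)"
    define i where "i = inv w m"
    define j where "j = inv w (Suc m)"
    have iN: "i < N" and jN: "j < N" unfolding i_def j_def using inv_lt[OF wp] m by auto
    have wi: "w i = m" "w j = Suc m" unfolding i_def j_def using wp by (auto simp: permutes_inverses(1))
    have sb: "same_block \<beta> i j" using R unfolding Rx_def i_def j_def by auto
    have "i < j"
    proof (rule ccontr)
      assume "\<not> i < j"
      moreover have "i \<noteq> j" using wi by auto
      ultimately have "j < i" by auto
      then have "w j < w i" using upper_mono[OF op w _ iN eqv_sym[OF E iN jN sb]] by auto
      then show False using wi by auto
    qed
    moreover have "act x (i, j, 0) = (m, Suc m, 0)" using wi R by (simp add: act_def x Rx_def)
    ultimately show "\<exists>i j. i < j \<and> j < N \<and> same_block \<beta> i j \<and> act x (i, j, 0) = (m, Suc m, 0)"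
      using jN sb by blast
  qed
  have "Wbetax N \<beta> x = adjgen N (Rx N \<beta> \<eta> w)"
    unfolding Wbetax_def adjgen_def
  proof (rule arg_cong[where f = gen])
    show "{transpose m (Suc m) |m. Suc m < N \<and>
        (\<exists>i j. i < j \<and> j < N \<and> same_block \<beta> i j \<and> act x (i, j, 0) = (m, Suc m, 0))} =
        {transpose m (Suc m) |m. Suc m < N \<and> Rx N \<beta> \<eta> w m (Suc m)}"
      using key by blast
  qed
  then show ?thesis using adjgen_char[OF Rx_eqv[OF op wp] Rx_intv[OF op w eta]] by simp
qed

theorem proposition2p17:
  fixes N :: nat and \<beta> :: "nat list" and x :: affW
  assumes "N \<ge> 2" and "ordered_partition N \<beta>" and "x \<in> Xbeta N \<beta>"
  shows "Wstab N \<beta> x = Wbetax N \<beta> x"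
proof -
  have op: "ordered_partition N \<beta>" using assms(2) .
  obtain \<eta> w where x0: "x = ((\<lambda>i. \<eta> i + eta_w N \<beta> w i), w)" and w: "w \<in> WbarUpper N \<beta>"
    and eta: "\<eta> \<in> Pminus N"
    using assms(3) unfolding Xbeta_def by blast
  let ?e = "etap N \<beta> \<eta> w"
  have x: "x = (?e, w)" using x0 by (simp add: etap_def[abs_def])
  have wp: "w permutes {0..<N}" using w by (auto simp: WbarUpper_def Wbar_def)
  have E: "eqv_on N (same_block \<beta>)" using sb_eqv[OF op] .
  let ?G = "Wbeta N \<beta>"
  have G: "?G = {v. v permutes {0..<N} \<and> (\<forall>i<N. same_block \<beta> (v i) i)}" using Wbeta_char[OF op] .
  have Gcomp: "v1 \<circ> v2 \<in> ?G" if "v1 \<in> ?G" "v2 \<in> ?G" for v1 v2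
    unfolding Wbeta_def using that unfolding Wbeta_def by (rule gen_comp)
  have Ginv: "inv v \<in> ?G" if v: "v \<in> ?G" for v
  proof -
    have vp: "v permutes {0..<N}" using v G by auto
    have "same_block \<beta> (inv v i) i" if i: "i < N" for i
    proof -
      have "same_block \<beta> (v (inv v i)) (inv v i)" using v G inv_lt[OF vp i] by auto
      then have "same_block \<beta> i (inv v i)" using vp by (simp add: permutes_inverses(1))
      then show ?thesis using eqv_sym[OF E i inv_lt[OF vp i]] by blast
    qed
    then show ?thesis using G permutes_inv[OF vp] by auto
  qed
  have idG: "id \<in> ?G" unfolding Wbeta_def by (rule gen_id)
  have coset: "coset N \<beta> x = (\<lambda>v. (?e, w \<circ> v)) ` ?G"
    unfolding coset_def by (simp add: x wmult_def emb_def)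
  have img: "(\<lambda>y. wmult (emb u) y) ` coset N \<beta> x = (\<lambda>v. ((\<lambda>i. ?e (inv u i)), u \<circ> (w \<circ> v))) ` ?G" for u
    unfolding coset image_image by (simp add: wmult_def emb_def)
  have Bx: "Wbetax N \<beta> x = {u. u permutes {0..<N} \<and> (\<forall>m<N. Rx N \<beta> \<eta> w (u m) m)}"
    using Wbetax_char[OF op w eta x] .
  show ?thesis
  proof
    show "Wstab N \<beta> x \<subseteq> Wbetax N \<beta> x"
    proof
      fix u assume u: "u \<in> Wstab N \<beta> x"
      then have up: "u permutes {0..<N}" by (simp add: Wstab_def Wbar_def)
      have "((\<lambda>i. ?e (inv u i)), u \<circ> (w \<circ> id)) \<in> (\<lambda>y. wmult (emb u) y) ` coset N \<beta> x"
        unfolding img using idG by blast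
      then have "((\<lambda>i. ?e (inv u i)), u \<circ> w) \<in> coset N \<beta> x" using u by (simp add: Wstab_def)
      then obtain v where v: "v \<in> ?G" and ev: "(\<lambda>i. ?e (inv u i)) = ?e" and uw: "u \<circ> w = w \<circ> v"
        unfolding coset by auto
      have vp: "v permutes {0..<N}" using v G by auto
      have "Rx N \<beta> \<eta> w (u m) m" if m: "m < N" for m
      proof -
        have "?e (inv u (u m)) = ?e (u m)" using ev by metis
        then have e1: "?e m = ?e (u m)" using up by (simp add: permutes_inverses(2))
        define k where "k = inv w m"
        have kN: "k < N" unfolding k_def using inv_lt[OF wp m] .
        have "u (w k) = w (v k)" using uw by (metis comp_apply)
        then have "u m = w (v k)" unfolding k_def using wp by (simp add: permutes_inverses(1))
        then have "inv w (u m) = v k" using wp by (simp add: permutes_inverses(2))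
        moreover have "same_block \<beta> (v k) k" using v G kN by auto
        ultimately show ?thesis unfolding Rx_def k_def using e1 by simp
      qed
      then show "u \<in> Wbetax N \<beta> x" using Bx up by auto
    qed
  next
    show "Wbetax N \<beta> x \<subseteq> Wstab N \<beta> x"
    proof
      fix u assume u: "u \<in> Wbetax N \<beta> x"
      then have up: "u permutes {0..<N}" and R: "\<forall>m<N. Rx N \<beta> \<eta> w (u m) m" using Bx by auto
      have ev: "(\<lambda>i. ?e (inv u i)) = ?e"
      proof
        fix i show "?e (inv u i) = ?e i"
        proof (cases "i < N")
          case True
          have "Rx N \<beta> \<eta> w (u (inv u i)) (inv u i)" using R inv_lt[OF up True] by blast
          then show ?thesis using up by (simp add: Rx_def permutes_inverses(1))
        next
          case False
          then have "inv u i = i" using permutes_inv[OF up] by (simp add: permutes_not_in)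
          then show ?thesis by simp
        qed
      qed
      define v' where "v' = inv w \<circ> u \<circ> w"
      have v'G: "v' \<in> ?G"
      proof -
        have "v' permutes {0..<N}" unfolding v'_def
          using permutes_inv[OF wp] up wp by (intro permutes_compose)
        moreover have "same_block \<beta> (v' i) i" if i: "i < N" for i
        proof -
          have "w i \<in> {0..<N} \<longleftrightarrow> i \<in> {0..<N}" by (rule permutes_in_image[OF wp])
          then have wi: "w i < N" using i by auto
          have "Rx N \<beta> \<eta> w (u (w i)) (w i)" using R wi by blast
          then show ?thesis unfolding v'_def Rx_def using wp by (simp add: permutes_inverses(2))
        qed
        ultimately show ?thesis using G by auto
      qed
      have uw: "u \<circ> (w \<circ> v) = w \<circ> (v' \<circ> v)" for v
        unfolding v'_def using wp by (simp add: fun_eq_iff permutes_inverses(1))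
      have "(\<lambda>v. ((\<lambda>i. ?e (inv u i)), u \<circ> (w \<circ> v))) ` ?G = (\<lambda>v. (?e, w \<circ> v)) ` ?G"
      proof
        show "(\<lambda>v. ((\<lambda>i. ?e (inv u i)), u \<circ> (w \<circ> v))) ` ?G \<subseteq> (\<lambda>v. (?e, w \<circ> v)) ` ?G"
          using uw ev Gcomp[OF v'G] by auto
        show "(\<lambda>v. (?e, w \<circ> v)) ` ?G \<subseteq> (\<lambda>v. ((\<lambda>i. ?e (inv u i)), u \<circ> (w \<circ> v))) ` ?G"
        proof
          fix y assume "y \<in> (\<lambda>v. (?e, w \<circ> v)) ` ?G"
          then obtain v where v: "v \<in> ?G" and y: "y = (?e, w \<circ> v)" by auto
          have vG: "inv v' \<circ> v \<in> ?G" using Gcomp[OF Ginv[OF v'G] v] .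
          have vp': "v' permutes {0..<N}" using v'G G by auto
          have "v' \<circ> (inv v' \<circ> v) = v" using vp' by (simp add: fun_eq_iff permutes_inverses(1))
          then have "u \<circ> (w \<circ> (inv v' \<circ> v)) = w \<circ> v" using uw[of "inv v' \<circ> v"] by simp
          then have "y = ((\<lambda>i. ?e (inv u i)), u \<circ> (w \<circ> (inv v' \<circ> v)))" using y ev by simp
          then show "y \<in> (\<lambda>v. ((\<lambda>i. ?e (inv u i)), u \<circ> (w \<circ> v))) ` ?G" using vG by blast
        qed
      qed
      then show "u \<in> Wstab N \<beta> x" unfolding Wstab_def Wbar_def img[symmetric] coset[symmetric]
        using up by simp
    qed
  qed
qed

end
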